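(* In the setting described in the context, let $g\in\mathcal{G}$ with $\int A\circ g\,d\mu<\infty$, and let $g_\star\nu=P_\sharp\big((g_\sharp\mu)_A\big)$ be the normalized measure associated with the invariant measure $g_\sharp\mu$. Then $$g_\star\nu=(P\circ g)_\sharp\,\mu_C,\qquad C=A\circ g.$$
   Context: Let $(\mathcal{X},\Sigma)$ be a measurable space, $\Phi^t$ a flow on $\mathcal{X}$ (bijective measurable maps, $\Phi^{t_1}\circ\Phi^{t_2}=\Phi^{t_1+t_2}$, jointly measurable), $f_\sharp$ push-forward, $\mu$ an invariant probability measure ($\Phi^t_\sharp\mu=\mu$ for all $t$). Let $h^a$, $a>0$, be bijective measurable maps and $\mathcal{G}$ a group of bijective measurable maps of $\mathcal{X}$ with $h^{a_1}\circ h^{a_2}=h^{a_1a_2}$, $\Phi^t\circ g=g\circ\Phi^t$, $g\circ h^a=h^a\circ g$, $\Phi^t\circ h^a=h^a\circ\Phi^{t/a}$ for all $a,a_1,a_2>0$, $t$, $g\in\mathcal{G}$. $\mathcal{Y}\subset\mathcal{X}$ is a representative set: for every $x$ there is a unique $a=A(x)>0$ with $h^a(x)\in\mathcal{Y}$, $A$ measurable with $\int A\,d\mu<\infty$; $P(x)=h^{A(x)}(x)$. For a measure $\rho$ and positive measurable $B$ with $0<\int B\,d\rho<\infty$, $\rho_B$ is the probability measure with $d\rho_B/d\rho=B/\int B\,d\rho$. $\nu=P_\sharp\mu_A$. *)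

theory Defs
  imports "HOL-Probability.Probability"
begin

definition push :: "('a \<Rightarrow> 'a) \<Rightarrow> 'a measure \<Rightarrow> 'a measure" where
  "push f \<rho> = distr \<rho> \<rho> f"

definition normalized :: "'a measure \<Rightarrow> ('a \<Rightarrow> real) \<Rightarrow> 'a measure" where
  "normalized \<rho> B = density \<rho> (\<lambda>x. ennreal (B x) / (\<integral>\<^sup>+ y. ennreal (B y) \<partial>\<rho>))"

definition bimeas :: "'a measure \<Rightarrow> ('a \<Rightarrow> 'a) \<Rightarrow> bool" where
  "bimeas M f \<longleftrightarrow> f \<in> measurable M M \<and> bij_betw f (space M) (space M)"

end

theory Submission
  imports Defs
begin

theorem proposition4:
  fixes \<mu> :: "'a measure"
    and \<Phi> :: "real \<Rightarrow> 'a \<Rightarrow> 'a"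
    and h :: "real \<Rightarrow> 'a \<Rightarrow> 'a"
    and \<G> :: "('a \<Rightarrow> 'a) set"
    and Y :: "'a set"
    and A :: "'a \<Rightarrow> real"
    and P :: "'a \<Rightarrow> 'a"
    and g :: "'a \<Rightarrow> 'a"
  assumes prob: "prob_space \<mu>"
    \<comment> \<open>flow\<close>
    and flow_bimeas: "\<And>t. bimeas \<mu> (\<Phi> t)"
    and flow_comp: "\<And>t1 t2 x. x \<in> space \<mu> \<Longrightarrow> \<Phi> t1 (\<Phi> t2 x) = \<Phi> (t1 + t2) x"
    and flow_joint: "(\<lambda>(t, x). \<Phi> t x) \<in> measurable (borel \<Otimes>\<^sub>M \<mu>) \<mu>"
    and invariant: "\<And>t. push (\<Phi> t) \<mu> = \<mu>"
    \<comment> \<open>scalings h^a\<close>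
    and h_bimeas: "\<And>a. a > 0 \<Longrightarrow> bimeas \<mu> (h a)"
    and h_comp: "\<And>a1 a2 x. a1 > 0 \<Longrightarrow> a2 > 0 \<Longrightarrow> x \<in> space \<mu> \<Longrightarrow> h a1 (h a2 x) = h (a1 * a2) x"
    \<comment> \<open>the group G\<close>
    and G_bimeas: "\<And>f. f \<in> \<G> \<Longrightarrow> bimeas \<mu> f"
    and G_id: "id \<in> \<G>"
    and G_comp: "\<And>f1 f2. f1 \<in> \<G> \<Longrightarrow> f2 \<in> \<G> \<Longrightarrow> f1 \<circ> f2 \<in> \<G>"
    and G_inv: "\<And>f. f \<in> \<G> \<Longrightarrow> \<exists>f'\<in>\<G>. \<forall>x\<in>space \<mu>. f' (f x) = x \<and> f (f' x) = x"
    \<comment> \<open>commutation relations\<close>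
    and flow_G: "\<And>t f x. f \<in> \<G> \<Longrightarrow> x \<in> space \<mu> \<Longrightarrow> \<Phi> t (f x) = f (\<Phi> t x)"
    and G_h: "\<And>f a x. f \<in> \<G> \<Longrightarrow> a > 0 \<Longrightarrow> x \<in> space \<mu> \<Longrightarrow> f (h a x) = h a (f x)"
    and flow_h: "\<And>t a x. a > 0 \<Longrightarrow> x \<in> space \<mu> \<Longrightarrow> \<Phi> t (h a x) = h a (\<Phi> (t / a) x)"
    \<comment> \<open>representative set Y, the function A, and the projection P\<close>
    and Y_sub: "Y \<subseteq> space \<mu>"
    and Y_rep: "\<And>x. x \<in> space \<mu> \<Longrightarrow> \<exists>!a. a > 0 \<and> h a x \<in> Y"
    and A_pos: "\<And>x. x \<in> space \<mu> \<Longrightarrow> A x > 0"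
    and A_rep: "\<And>x. x \<in> space \<mu> \<Longrightarrow> h (A x) x \<in> Y"
    and A_meas: "A \<in> borel_measurable \<mu>"
    and A_int: "(\<integral>\<^sup>+ x. ennreal (A x) \<partial>\<mu>) < \<infinity>"
    and P_def: "\<And>x. P x = h (A x) x"
    \<comment> \<open>the hypotheses on g\<close>
    and g_G: "g \<in> \<G>"
    and Ag_int: "(\<integral>\<^sup>+ x. ennreal (A (g x)) \<partial>\<mu>) < \<infinity>"
  shows "push P (normalized (push g \<mu>) A) = push (P \<circ> g) (normalized \<mu> (A \<circ> g))"
proof -
  have gm: "g \<in> measurable \<mu> \<mu>" using G_bimeas[OF g_G] by (simp add: bimeas_def)
  have Am[measurable]: "(\<lambda>x. ennreal (A x)) \<in> borel_measurable \<mu>" using A_meas by measurable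
  obtain f' where f'G: "f' \<in> \<G>" and f'inv: "\<forall>x\<in>space \<mu>. f' (g x) = x \<and> g (f' x) = x"
    using G_inv[OF g_G] by blast
  have f'm: "f' \<in> measurable \<mu> \<mu>" using G_bimeas[OF f'G] by (simp add: bimeas_def)
  define c where "c = (\<integral>\<^sup>+ y. ennreal (A (g y)) \<partial>\<mu>)"
  have c1: "(\<integral>\<^sup>+ y. ennreal (A y) \<partial>distr \<mu> \<mu> g) = c"
    unfolding c_def by (rule nn_integral_distr[OF gm]) (simp add: Am)
  define N where "N = density \<mu> (\<lambda>x. ennreal (A (g x)) / c)"
  have L: "normalized (push g \<mu>) A = distr N \<mu> g"
    unfolding normalized_def push_def c1 N_def
    by (rule density_distr[OF _ gm]) (use Am in measurable)
  have R: "normalized \<mu> (A \<circ> g) = N"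
    unfolding normalized_def N_def c_def by simp
  have sN: "sets N = sets \<mu>" "space N = space \<mu>" unfolding N_def by auto
  have sD: "sets (distr N \<mu> g) = sets \<mu>" "space (distr N \<mu> g) = space \<mu>" by auto
  have gN: "g \<in> measurable N \<mu>" using gm measurable_cong_sets[OF sN(1) refl, of \<mu>] by simp
  have key: "emeasure (distr N \<mu> g) (P -` X \<inter> space \<mu>) = emeasure N ((P \<circ> g) -` X \<inter> space \<mu>)" for X
  proof -
    let ?S = "P -` X \<inter> space \<mu>"
    have gsp: "\<And>x. x \<in> space \<mu> \<Longrightarrow> g x \<in> space \<mu>" using gm by (meson measurable_space)
    have pre: "g -` ?S \<inter> space \<mu> = (P \<circ> g) -` X \<inter> space \<mu>" using gsp by auto
    show ?thesis
    proof (cases "?S \<in> sets \<mu>")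
      case True
      then show ?thesis using gN pre by (simp add: emeasure_distr sN)
    next
      case False
      have "(P \<circ> g) -` X \<inter> space \<mu> \<notin> sets \<mu>"
      proof
        assume "(P \<circ> g) -` X \<inter> space \<mu> \<in> sets \<mu>"
        then have "f' -` ((P \<circ> g) -` X \<inter> space \<mu>) \<inter> space \<mu> \<in> sets \<mu>"
          by (rule measurable_sets[OF f'm])
        moreover have "f' -` ((P \<circ> g) -` X \<inter> space \<mu>) \<inter> space \<mu> = ?S"
        proof (intro set_eqI iffI)
          fix x assume "x \<in> f' -` ((P \<circ> g) -` X \<inter> space \<mu>) \<inter> space \<mu>"
          then show "x \<in> ?S" using f'inv by auto
        next
          fix x assume x: "x \<in> ?S"
          have "f' x \<in> space \<mu>" using f'm x by (meson IntD2 measurable_space)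
          then show "x \<in> f' -` ((P \<circ> g) -` X \<inter> space \<mu>) \<inter> space \<mu>" using f'inv x by auto
        qed
        ultimately show False using False by simp
      qed
      then show ?thesis using False by (simp add: emeasure_notin_sets sN)
    qed
  qed
  show ?thesis
  proof -
    have "push P (normalized (push g \<mu>) A) = distr (distr N \<mu> g) (distr N \<mu> g) P"
      using L by (simp add: push_def)
    also have "\<dots> = measure_of (space \<mu>) (sets \<mu>) (\<lambda>X. emeasure (distr N \<mu> g) (P -` X \<inter> space \<mu>))"
      by (simp only: distr_def[of "distr N \<mu> g"] sD)
    also have "\<dots> = measure_of (space \<mu>) (sets \<mu>) (\<lambda>X. emeasure N ((P \<circ> g) -` X \<inter> space \<mu>))"
      by (simp only: key)
    also have "\<dots> = distr N N (P \<circ> g)"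
      by (simp only: distr_def[of N] sN)
    also have "\<dots> = push (P \<circ> g) (normalized \<mu> (A \<circ> g))"
      using R by (simp add: push_def)
    finally show ?thesis .
  qed
qed

end
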